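(* Let $n$ be a positive integer and let $T$ be a strongly connected tournament on $n$ vertices which is not isomorphic to $D_n$, and let $k>1$ be an integer. Then $P(T;k)<P(D_n;k)$. Here $D_n$ is the tournament on $\{v_1,\ldots,v_n\}$ in which, for $1\le i<j\le n$ with $(i,j)\ne(1,n)$, the edge between $v_i$ and $v_j$ is directed from $v_i$ to $v_j$, and the edge between $v_1$ and $v_n$ is directed from $v_n$ to $v_1$.
   Context: A tournament is an orientation of a complete graph; it is strongly connected if for any two vertices there is a directed path from each to the other. For a positive integer $k$, a proper $k$-coloring of a digraph $D$ is a map $c:V(D)\to\{1,\ldots,k\}$ such that each color class induces a subdigraph with no directed cycle; $P(D;k)$ denotes the number of proper $k$-colorings of $D$. *)

theory Defs
  imports Main "HOL-Library.FuncSet"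
begin

definition tournament :: "'a set \<Rightarrow> 'a rel \<Rightarrow> bool" where
  "tournament V A \<longleftrightarrow> A \<subseteq> V \<times> V \<and> (\<forall>v\<in>V. (v, v) \<notin> A) \<and>
     (\<forall>u\<in>V. \<forall>v\<in>V. u \<noteq> v \<longrightarrow> ((u, v) \<in> A \<longleftrightarrow> (v, u) \<notin> A))"

definition strongly_connected :: "'a set \<Rightarrow> 'a rel \<Rightarrow> bool" where
  "strongly_connected V A \<longleftrightarrow> (\<forall>u\<in>V. \<forall>v\<in>V. (u, v) \<in> (A \<inter> V \<times> V)\<^sup>*)"

definition proper_coloring :: "'a set \<Rightarrow> 'a rel \<Rightarrow> nat \<Rightarrow> ('a \<Rightarrow> nat) \<Rightarrow> bool" where
  "proper_coloring V A k c \<longleftrightarrow> (\<forall>v\<in>V. c v \<in> {1..k}) \<and>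
     (\<forall>i\<in>{1..k}. acyclic (A \<inter> ({v\<in>V. c v = i} \<times> {v\<in>V. c v = i})))"

definition chrom_poly :: "'a set \<Rightarrow> 'a rel \<Rightarrow> nat \<Rightarrow> nat" where
  "chrom_poly V A k = card {c \<in> V \<rightarrow>\<^sub>E {1..k}. proper_coloring V A k c}"

definition D_arcs :: "nat \<Rightarrow> nat rel" where
  "D_arcs n = {(i, j). i \<in> {1..n} \<and> j \<in> {1..n} \<and>
      ((i < j \<and> (i, j) \<noteq> (1, n)) \<or> (i = n \<and> j = 1 \<and> 1 < n))}"

definition digraph_iso :: "'a set \<Rightarrow> 'a rel \<Rightarrow> 'b set \<Rightarrow> 'b rel \<Rightarrow> bool" where
  "digraph_iso V A W B \<longleftrightarrow> (\<exists>f. bij_betw f V W \<and>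
      (\<forall>u\<in>V. \<forall>v\<in>V. (u, v) \<in> A \<longleftrightarrow> (f u, f v) \<in> B))"

end

theory Submission
  imports Defs
begin

definition tri :: "'a rel \<Rightarrow> 'a \<Rightarrow> 'a \<Rightarrow> 'a \<Rightarrow> bool" where
  "tri A a b d \<longleftrightarrow> (a, b) \<in> A \<and> (b, d) \<in> A \<and> (d, a) \<in> A"

lemma tri_rot: "tri A a b d \<Longrightarrow> tri A b d a"
  unfolding tri_def by auto

lemma tourn_sub: "tournament V A \<Longrightarrow> S \<subseteq> V \<Longrightarrow> tournament S (A \<inter> S \<times> S)"
  unfolding tournament_def by blast

lemma tourn_in: "tournament V A \<Longrightarrow> (a, b) \<in> A \<Longrightarrow> a \<in> V \<and> b \<in> V"
  unfolding tournament_def by blast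

lemma tourn_irr: "tournament V A \<Longrightarrow> (a, a) \<notin> A"
  unfolding tournament_def by blast

lemma tourn_asym: "tournament V A \<Longrightarrow> (a, b) \<in> A \<Longrightarrow> (b, a) \<notin> A"
  unfolding tournament_def by (cases "a = b") blast+

lemma tourn_tot: "tournament V A \<Longrightarrow> a \<in> V \<Longrightarrow> b \<in> V \<Longrightarrow> a \<noteq> b \<Longrightarrow> (a, b) \<notin> A \<Longrightarrow> (b, a) \<in> A"
  unfolding tournament_def by blast

lemma relpow_cycle_tri:
  assumes asym: "\<forall>a b. (a, b) \<in> R \<longrightarrow> (b, a) \<notin> R"
    and tot: "\<forall>a\<in>C. \<forall>b\<in>C. a \<noteq> b \<longrightarrow> (a, b) \<in> R \<or> (b, a) \<in> R"
    and sub: "R \<subseteq> C \<times> C"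
  shows "(a, a) \<in> R ^^ n \<Longrightarrow> n > 0 \<Longrightarrow> \<exists>x y z. (x, y) \<in> R \<and> (y, z) \<in> R \<and> (z, x) \<in> R"
proof (induction n arbitrary: a rule: less_induct)
  case (less n)
  then obtain m where n: "n = Suc m" by (cases n) auto
  with less.prems obtain b where ab: "(a, b) \<in> R" and ba: "(b, a) \<in> R ^^ m"
    using relpow_Suc_D2 by metis
  show ?case
  proof (cases m)
    case 0
    then show ?thesis using ab ba asym by auto
  next
    case (Suc l)
    with ba obtain d where bd: "(b, d) \<in> R" and da: "(d, a) \<in> R ^^ l"
      using relpow_Suc_D2 by metis
    show ?thesis
    proof (cases "(d, a) \<in> R")
      case True
      then show ?thesis using ab bd by blast
    next
      case False
      have "d \<noteq> a" using ab bd asym by auto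
      moreover have "d \<in> C" "a \<in> C" using ab bd sub by auto
      ultimately have ad: "(a, d) \<in> R" using tot False by blast
      show ?thesis
      proof (cases l)
        case 0
        then show ?thesis using da \<open>d \<noteq> a\<close> by auto
      next
        case (Suc j)
        have "(a, a) \<in> R ^^ Suc l" using ad da relpow_Suc_I2 by metis
        moreover have "Suc l < n" using n \<open>m = Suc l\<close> by simp
        ultimately show ?thesis using less.IH by blast
      qed
    qed
  qed
qed

lemma proper_iff:
  assumes T: "tournament V A"
  shows "proper_coloring V A k c \<longleftrightarrow> (\<forall>v\<in>V. c v \<in> {1..k}) \<and>
     (\<forall>a b d. tri A a b d \<longrightarrow> \<not> (c a = c b \<and> c b = c d))"
proof
  assume P: "proper_coloring V A k c"
  have "\<not> (c a = c b \<and> c b = c d)" if t: "tri A a b d" for a b d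
  proof
    assume eq: "c a = c b \<and> c b = c d"
    have V: "a \<in> V" "b \<in> V" "d \<in> V" using t T unfolding tri_def tournament_def by auto
    define i where "i = c a"
    have i: "i \<in> {1..k}" using P V unfolding proper_coloring_def i_def by auto
    let ?C = "{v \<in> V. c v = i}"
    let ?R = "A \<inter> ?C \<times> ?C"
    have "(a, b) \<in> ?R" "(b, d) \<in> ?R" "(d, a) \<in> ?R" using t V eq unfolding tri_def i_def by auto
    then have "(a, a) \<in> ?R\<^sup>+" by (meson trancl.simps)
    moreover have "acyclic ?R" using P i unfolding proper_coloring_def by blast
    ultimately show False unfolding acyclic_def by blast
  qed
  then show "(\<forall>v\<in>V. c v \<in> {1..k}) \<and> (\<forall>a b d. tri A a b d \<longrightarrow> \<not> (c a = c b \<and> c b = c d))"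
    using P unfolding proper_coloring_def by blast
next
  assume H: "(\<forall>v\<in>V. c v \<in> {1..k}) \<and> (\<forall>a b d. tri A a b d \<longrightarrow> \<not> (c a = c b \<and> c b = c d))"
  have "acyclic (A \<inter> ({v\<in>V. c v = i} \<times> {v\<in>V. c v = i}))" for i
  proof -
    let ?C = "{v \<in> V. c v = i}"
    let ?R = "A \<inter> ?C \<times> ?C"
    have asym: "\<forall>a b. (a, b) \<in> ?R \<longrightarrow> (b, a) \<notin> ?R" using tourn_asym[OF T] by blast
    have tot: "\<forall>a\<in>?C. \<forall>b\<in>?C. a \<noteq> b \<longrightarrow> (a, b) \<in> ?R \<or> (b, a) \<in> ?R"
      using T unfolding tournament_def by blast
    have sub: "?R \<subseteq> ?C \<times> ?C" by blast
    show ?thesis unfolding acyclic_def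
    proof (intro allI notI)
      fix a assume "(a, a) \<in> ?R\<^sup>+"
      then obtain n where "n > 0" "(a, a) \<in> ?R ^^ n" using trancl_power by blast
      then obtain x y z where "(x, y) \<in> ?R" "(y, z) \<in> ?R" "(z, x) \<in> ?R"
        using relpow_cycle_tri[OF asym tot sub] by blast
      then have "tri A x y z" "c x = c y \<and> c y = c z" unfolding tri_def by auto
      then show False using H by blast
    qed
  qed
  then show "proper_coloring V A k c" using H unfolding proper_coloring_def by blast
qed

lemma rtrancl_closed:
  assumes "(a, b) \<in> R\<^sup>*" "a \<in> X" "\<forall>p q. (p, q) \<in> R \<longrightarrow> p \<in> X \<longrightarrow> q \<in> X"
  shows "b \<in> X"
  using assms by (induction rule: rtrancl_induct) auto

lemma vertex_on_tri:
  assumes T: "tournament V A" and SC: "strongly_connected V A" and v: "v \<in> V" "w \<in> V" "w \<noteq> v"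
  shows "\<exists>x y. tri A v x y"
proof (rule ccontr)
  assume nt: "\<not> (\<exists>x y. tri A v x y)"
  let ?R = "A \<inter> V \<times> V"
  have "(v, w) \<in> ?R\<^sup>*" using SC v unfolding strongly_connected_def by blast
  then obtain o' where vo: "(v, o') \<in> ?R" using v(3)
    by (metis converse_rtranclE)
  let ?O = "{u \<in> V. (v, u) \<in> A}"
  have cl: "\<forall>p q. (p, q) \<in> ?R \<longrightarrow> p \<in> ?O \<longrightarrow> q \<in> ?O"
  proof (intro allI impI)
    fix p q assume pq: "(p, q) \<in> ?R" and p: "p \<in> ?O"
    have "q \<noteq> v" using pq p tourn_asym[OF T] by blast
    moreover have "p \<noteq> v" using p tourn_irr[OF T] by blast
    ultimately have "(v, q) \<in> A"
      using tourn_tot[OF T, of q v] pq p nt v unfolding tri_def by blast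
    then show "q \<in> ?O" using pq by blast
  qed
  have "(o', v) \<in> ?R\<^sup>*" using SC v vo unfolding strongly_connected_def by blast
  then have "v \<in> ?O" using rtrancl_closed[OF _ _ cl] vo by blast
  then show False using tourn_irr[OF T] by blast
qed



lemma strong_hub:
  assumes h: "h \<in> X" and to: "\<forall>a\<in>X. (a, h) \<in> (A \<inter> X \<times> X)\<^sup>*"
    and from': "\<forall>b\<in>X. (h, b) \<in> (A \<inter> X \<times> X)\<^sup>*"
  shows "strongly_connected X (A \<inter> X \<times> X)"
proof -
  have e: "A \<inter> X \<times> X \<inter> X \<times> X = A \<inter> X \<times> X" by blast
  show ?thesis unfolding strongly_connected_def e
    using to from' rtrancl_trans[of _ h "A \<inter> X \<times> X"] by blast
qed

lemma lift_rt:
  assumes "S \<subseteq> X" "(a, b) \<in> (A \<inter> S \<times> S)\<^sup>*"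
  shows "(a, b) \<in> (A \<inter> X \<times> X)\<^sup>*"
proof -
  have "A \<inter> S \<times> S \<subseteq> A \<inter> X \<times> X" using assms(1) by blast
  then have "(A \<inter> S \<times> S)\<^sup>* \<subseteq> (A \<inter> X \<times> X)\<^sup>*" by (rule rtrancl_mono)
  with assms(2) show ?thesis by blast
qed

lemma strong_sub_rt:
  assumes "strongly_connected S (A \<inter> S \<times> S)" "a \<in> S" "b \<in> S" "S \<subseteq> X"
  shows "(a, b) \<in> (A \<inter> X \<times> X)\<^sup>*"
proof -
  have e: "A \<inter> S \<times> S \<inter> S \<times> S = A \<inter> S \<times> S" by blast
  have "(a, b) \<in> (A \<inter> S \<times> S)\<^sup>*" using assms(1-3) unfolding strongly_connected_def e by blast
  then show ?thesis by (rule lift_rt[OF assms(4)])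
qed

lemma step_rt: "(a, b) \<in> A \<Longrightarrow> a \<in> X \<Longrightarrow> b \<in> X \<Longrightarrow> (a, b) \<in> (A \<inter> X \<times> X)\<^sup>*"
  by blast

lemma strong_minus_vertex:
  assumes T: "tournament V A" and SC: "strongly_connected V A" and fin: "finite V"
    and c4: "card V \<ge> 4"
  shows "\<exists>v\<in>V. strongly_connected (V - {v}) (A \<inter> (V - {v}) \<times> (V - {v}))"
proof -
  define F where "F = {S. S \<subseteq> V \<and> S \<noteq> V \<and> S \<noteq> {} \<and> strongly_connected S (A \<inter> S \<times> S)}"
  have "F \<subseteq> Pow V" unfolding F_def by blast
  then have finF: "finite F" using fin by (meson finite_Pow_iff finite_subset)
  have "V \<noteq> {}" using c4 by auto
  then obtain w0 where w0: "w0 \<in> V" by blast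
  have "{w0} \<in> F"
  proof -
    have "{w0} \<noteq> V" using c4 by auto
    moreover have "strongly_connected {w0} (A \<inter> {w0} \<times> {w0})"
      unfolding strongly_connected_def by auto
    ultimately show ?thesis unfolding F_def using w0 by auto
  qed
  then have Fne: "F \<noteq> {}" by blast
  define mx where "mx = Max (card ` F)"
  have "mx \<in> card ` F" unfolding mx_def using finF Fne by simp
  then obtain S where SF: "S \<in> F" and cS: "card S = mx" by blast
  have maxS: "card S' \<le> card S" if "S' \<in> F" for S'
    using Max_ge[of "card ` F" "card S'"] finF that cS unfolding mx_def by auto
  have SV: "S \<subseteq> V" "S \<noteq> V" "S \<noteq> {}" and SS: "strongly_connected S (A \<inter> S \<times> S)"
    using SF unfolding F_def by auto
  have finS: "finite S" using SV fin finite_subset by blast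
  have cSV: "card S < card V" using SV fin by (meson psubset_card_mono psubsetI)
  show ?thesis
  proof (cases "card S + 1 = card V")
    case True
    have "card (V - S) = 1" using True card_Diff_subset[OF finS SV(1)] by simp
    then obtain v where v: "V - S = {v}" using card_1_singletonE by blast
    then have "v \<in> V" "V - {v} = S" using SV by auto
    then show ?thesis using SS by auto
  next
    case False
    then have c2: "card S + 2 \<le> card V" using cSV by linarith
    have nomix: "\<not> (\<exists>w\<in>V - S. \<exists>s1\<in>S. \<exists>s2\<in>S. (w, s1) \<in> A \<and> (s2, w) \<in> A)"
    proof
      assume "\<exists>w\<in>V - S. \<exists>s1\<in>S. \<exists>s2\<in>S. (w, s1) \<in> A \<and> (s2, w) \<in> A"
      then obtain w s1 s2 where w: "w \<in> V - S" and s: "s1 \<in> S" "s2 \<in> S" "(w, s1) \<in> A" "(s2, w) \<in> A"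
        by blast
      let ?X = "insert w S"
      have "strongly_connected ?X (A \<inter> ?X \<times> ?X)"
      proof (rule strong_hub[of w])
        show "w \<in> ?X" by simp
        show "\<forall>a\<in>?X. (a, w) \<in> (A \<inter> ?X \<times> ?X)\<^sup>*"
        proof
          fix a assume a: "a \<in> ?X"
          show "(a, w) \<in> (A \<inter> ?X \<times> ?X)\<^sup>*"
          proof (cases "a = w")
            case False
            then have "a \<in> S" using a by simp
            then have "(a, s2) \<in> (A \<inter> ?X \<times> ?X)\<^sup>*" using strong_sub_rt[OF SS _ s(2)] by blast
            moreover have "(s2, w) \<in> A \<inter> ?X \<times> ?X" using s by auto
            ultimately show ?thesis by (meson rtrancl.rtrancl_into_rtrancl)
          qed simp
        qed
        show "\<forall>b\<in>?X. (w, b) \<in> (A \<inter> ?X \<times> ?X)\<^sup>*"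
        proof
          fix b assume b: "b \<in> ?X"
          show "(w, b) \<in> (A \<inter> ?X \<times> ?X)\<^sup>*"
          proof (cases "b = w")
            case False
            then have "b \<in> S" using b by simp
            then have "(s1, b) \<in> (A \<inter> ?X \<times> ?X)\<^sup>*" using strong_sub_rt[OF SS s(1)] by blast
            moreover have "(w, s1) \<in> A \<inter> ?X \<times> ?X" using s by auto
            ultimately show ?thesis by (meson converse_rtrancl_into_rtrancl)
          qed simp
        qed
      qed
      moreover have "card ?X = card S + 1" using w finS by simp
      moreover have "?X \<noteq> V" using c2 calculation(2) by auto
      ultimately have "?X \<in> F" unfolding F_def using w SV by auto
      then show False using maxS[of ?X] \<open>card ?X = card S + 1\<close> by simp
    qed
    define W where "W = {w \<in> V - S. \<forall>s\<in>S. (s, w) \<in> A}"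
    define U where "U = {u \<in> V - S. \<forall>s\<in>S. (u, s) \<in> A}"
    have WU: "q \<in> W \<or> q \<in> U" if q: "q \<in> V - S" for q
    proof -
      have "(\<forall>s\<in>S. (s, q) \<in> A) \<or> (\<forall>s\<in>S. (q, s) \<in> A)"
      proof (rule ccontr)
        assume "\<not> ?thesis"
        then obtain s1 s2 where "s1 \<in> S" "(s1, q) \<notin> A" "s2 \<in> S" "(q, s2) \<notin> A" by blast
        moreover have "s1 \<noteq> q" "s2 \<noteq> q" using q calculation by auto
        ultimately have "(q, s1) \<in> A" "(s2, q) \<in> A" using tourn_tot[OF T] q SV by blast+
        then show False using nomix q \<open>s1 \<in> S\<close> \<open>s2 \<in> S\<close> by blast
      qed
      then show ?thesis unfolding W_def U_def using q by blast
    qed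
    obtain s0 where s0: "s0 \<in> S" using SV by blast
    let ?R = "A \<inter> V \<times> V"
    have "\<exists>w\<in>W. \<exists>u\<in>U. (w, u) \<in> A"
    proof (rule ccontr)
      assume no: "\<not> ?thesis"
      have cl: "\<forall>p q. (p, q) \<in> ?R \<longrightarrow> p \<in> S \<union> W \<longrightarrow> q \<in> S \<union> W"
      proof (intro allI impI)
        fix p q assume pq: "(p, q) \<in> ?R" and p: "p \<in> S \<union> W"
        show "q \<in> S \<union> W"
        proof (cases "q \<in> S")
          case False
          then have "q \<in> V - S" using pq by blast
          then have "q \<in> W \<or> q \<in> U" using WU by blast
          moreover have "q \<notin> U"
          proof
            assume qU: "q \<in> U"
            show False
            proof (cases "p \<in> S")
              case True
              then have "(q, p) \<in> A" using qU unfolding U_def by blast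
              then show False using pq tourn_asym[OF T] by blast
            next
              case False
              then have "p \<in> W" using p by blast
              then show False using no qU pq by blast
            qed
          qed
          ultimately show ?thesis by blast
        qed simp
      qed
      obtain r where r: "r \<in> V - S" using SV by blast
      have "(s0, r) \<in> ?R\<^sup>*" using SC s0 r SV unfolding strongly_connected_def by blast
      then have "r \<in> S \<union> W" using rtrancl_closed[OF _ _ cl] s0 by blast
      then have rW: "r \<in> W" using r by blast
      have VW: "V - S \<subseteq> W" 
      proof
        fix q assume q: "q \<in> V - S"
        have "(s0, q) \<in> ?R\<^sup>*" using SC s0 q SV unfolding strongly_connected_def by blast
        then have "q \<in> S \<union> W" using rtrancl_closed[OF _ _ cl] s0 by blast
        then show "q \<in> W" using q by blast
      qed
      have cl2: "\<forall>p q. (p, q) \<in> ?R \<longrightarrow> p \<in> W \<longrightarrow> q \<in> W"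
      proof (intro allI impI)
        fix p q assume pq: "(p, q) \<in> ?R" and p: "p \<in> W"
        show "q \<in> W"
        proof (cases "q \<in> S")
          case True
          then have "(q, p) \<in> A" using p unfolding W_def by blast
          then show ?thesis using pq tourn_asym[OF T] by blast
        next
          case False
          then show ?thesis using VW pq by blast
        qed
      qed
      have "(r, s0) \<in> ?R\<^sup>*" using SC s0 r SV unfolding strongly_connected_def by blast
      then have "s0 \<in> W" using rtrancl_closed[OF _ _ cl2] rW by blast
      then show False using s0 unfolding W_def by blast
    qed
    then obtain w u where w: "w \<in> W" and u: "u \<in> U" and wu: "(w, u) \<in> A" by blast
    have wS: "w \<in> V" "w \<notin> S" "\<forall>s\<in>S. (s, w) \<in> A" using w unfolding W_def by auto
    have uS: "u \<in> V" "u \<notin> S" "\<forall>s\<in>S. (u, s) \<in> A" using u unfolding U_def by auto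
    have "w \<noteq> u" using wS uS s0 tourn_asym[OF T] by blast
    let ?X = "S \<union> {w, u}"
    have cX: "card ?X = card S + 2" using wS uS \<open>w \<noteq> u\<close> finS by simp
    have XV: "?X = V"
    proof (rule ccontr)
      assume ne: "?X \<noteq> V"
      have "strongly_connected ?X (A \<inter> ?X \<times> ?X)"
      proof (rule strong_hub[of w])
        show "w \<in> ?X" by simp
        show "\<forall>a\<in>?X. (a, w) \<in> (A \<inter> ?X \<times> ?X)\<^sup>*"
        proof
          fix a assume a: "a \<in> ?X"
          show "(a, w) \<in> (A \<inter> ?X \<times> ?X)\<^sup>*"
          proof (cases "a \<in> S")
            case True
            then show ?thesis using wS by blast
          next
            case False
            then have "a = w \<or> a = u" using a by blast
            moreover have "(u, s0) \<in> A \<inter> ?X \<times> ?X" "(s0, w) \<in> A \<inter> ?X \<times> ?X" using uS wS s0 by auto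
            ultimately show ?thesis by (meson converse_rtrancl_into_rtrancl r_into_rtrancl rtrancl.rtrancl_refl)
          qed
        qed
        show "\<forall>b\<in>?X. (w, b) \<in> (A \<inter> ?X \<times> ?X)\<^sup>*"
        proof
          fix b assume b: "b \<in> ?X"
          have wu': "(w, u) \<in> A \<inter> ?X \<times> ?X" using wu by auto
          show "(w, b) \<in> (A \<inter> ?X \<times> ?X)\<^sup>*"
          proof (cases "b \<in> S")
            case True
            then have "(u, b) \<in> A \<inter> ?X \<times> ?X" using uS by auto
            then show ?thesis using wu' by (meson converse_rtrancl_into_rtrancl r_into_rtrancl)
          next
            case False
            then have "b = w \<or> b = u" using b by blast
            then show ?thesis using wu' by auto
          qed
        qed
      qed
      moreover have "?X \<subseteq> V" using SV wS uS by auto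
      ultimately have "?X \<in> F" unfolding F_def using ne by auto
      then show False using maxS[of ?X] cX by simp
    qed
    then have "card S \<ge> 2" using cX c4 by simp
    then have "card (S - {s0}) \<ge> 1" using s0 finS by simp
    then have "S - {s0} \<noteq> {}" by (metis card.empty not_one_le_zero)
    then obtain t where t: "t \<in> S" "t \<noteq> s0" by blast
    let ?Y = "V - {s0}"
    have Ye: "?Y = (S - {s0}) \<union> {w, u}" using XV wS uS s0 by auto
    have "strongly_connected ?Y (A \<inter> ?Y \<times> ?Y)"
    proof (rule strong_hub[of w])
      show "w \<in> ?Y" using Ye by blast
      have wu': "(w, u) \<in> A \<inter> ?Y \<times> ?Y" using wu Ye by auto
      show "\<forall>a\<in>?Y. (a, w) \<in> (A \<inter> ?Y \<times> ?Y)\<^sup>*"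
      proof
        fix a assume a: "a \<in> ?Y"
        show "(a, w) \<in> (A \<inter> ?Y \<times> ?Y)\<^sup>*"
        proof (cases "a \<in> S")
          case True
          then show ?thesis using wS a Ye by blast
        next
          case False
          then have "a = w \<or> a = u" using a Ye by blast
          moreover have "(u, t) \<in> A \<inter> ?Y \<times> ?Y" "(t, w) \<in> A \<inter> ?Y \<times> ?Y" using uS wS t Ye by auto
          ultimately show ?thesis by (meson converse_rtrancl_into_rtrancl r_into_rtrancl rtrancl.rtrancl_refl)
        qed
      qed
      show "\<forall>b\<in>?Y. (w, b) \<in> (A \<inter> ?Y \<times> ?Y)\<^sup>*"
      proof
        fix b assume b: "b \<in> ?Y"
        show "(w, b) \<in> (A \<inter> ?Y \<times> ?Y)\<^sup>*"
        proof (cases "b \<in> S")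
          case True
          then have "(u, b) \<in> A \<inter> ?Y \<times> ?Y" using uS b Ye by auto
          then show ?thesis using wu' by (meson converse_rtrancl_into_rtrancl r_into_rtrancl)
        next
          case False
          then have "b = w \<or> b = u" using b Ye by blast
          then show ?thesis using wu' by auto
        qed
      qed
    qed
    then show ?thesis using s0 SV by blast
  qed
qed



lemma upd_in_PiE: "f \<in> (S - {y}) \<rightarrow>\<^sub>E K \<Longrightarrow> i \<in> K \<Longrightarrow> y \<in> S \<Longrightarrow> f(y := i) \<in> S \<rightarrow>\<^sub>E K"
  using PiE_fun_upd[of i "\<lambda>_. K" y f "S - {y}"] by (simp add: insert_absorb)

lemma del_in_PiE: "c \<in> S \<rightarrow>\<^sub>E K \<Longrightarrow> c(y := undefined) \<in> (S - {y}) \<rightarrow>\<^sub>E K"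
  by (auto simp: PiE_iff extensional_def)

lemma card_neq:
  assumes fS: "finite S" and xy: "x \<in> S" "y \<in> S" "x \<noteq> y" and fK: "finite K"
  shows "card {c \<in> S \<rightarrow>\<^sub>E K. c x \<noteq> c y} = (card K - 1) * card K ^ (card S - 1)"
proof -
  let ?L = "{c \<in> S \<rightarrow>\<^sub>E K. c x \<noteq> c y}"
  let ?R = "SIGMA f:(S - {y}) \<rightarrow>\<^sub>E K. K - {f x}"
  have "bij_betw (\<lambda>c. (c(y := undefined), c y)) ?L ?R"
  proof (rule bij_betw_byWitness[where f' = "\<lambda>p. (fst p)(y := snd p)"])
    show "\<forall>a\<in>?L. (\<lambda>p. (fst p)(y := snd p)) (a(y := undefined), a y) = a" by simp
    show "\<forall>a'\<in>?R. (\<lambda>c. (c(y := undefined), c y)) ((\<lambda>p. (fst p)(y := snd p)) a') = a'"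
    proof (rule ballI)
      fix a' assume a'R: "a' \<in> ?R"
      obtain f i where a': "a' = (f, i)" by (cases a')
      have f: "f \<in> (S - {y}) \<rightarrow>\<^sub>E K" using a'R unfolding a' by (rule SigmaD1)
      have fy: "f y = undefined" by (rule PiE_arb[OF f]) simp
      have "(f(y := i))(y := undefined) = f(y := undefined)" by simp
      also have "\<dots> = f" by (rule fun_upd_idem[of f y undefined, OF fy])
      finally have upd: "(f(y := i))(y := undefined) = f" .
      then show "(\<lambda>c. (c(y := undefined), c y)) ((\<lambda>p. (fst p)(y := snd p)) a') = a'"
        using upd unfolding a' by simp
    qed
    show "(\<lambda>c. (c(y := undefined), c y)) ` ?L \<subseteq> ?R"
    proof
      fix p assume "p \<in> (\<lambda>c. (c(y := undefined), c y)) ` ?L"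
      then obtain c where cL: "c \<in> ?L" and p: "p = (c(y := undefined), c y)" by (rule imageE)
      have c: "c \<in> S \<rightarrow>\<^sub>E K" "c x \<noteq> c y" using cL by auto
      have cy: "c y \<in> K" using c(1) xy(2) by (rule PiE_mem)
      have "c y \<in> K - {(c(y := undefined)) x}" using cy c(2) xy(3) by simp
      then show "p \<in> ?R" unfolding p by (rule SigmaI[OF del_in_PiE[OF c(1)]])
    qed
    show "(\<lambda>p. (fst p)(y := snd p)) ` ?R \<subseteq> ?L"
    proof
      fix c assume "c \<in> (\<lambda>p. (fst p)(y := snd p)) ` ?R"
      then obtain p where pR: "p \<in> ?R" and c: "c = (fst p)(y := snd p)" by (rule imageE)
      obtain f i where p: "p = (f, i)" by (cases p)
      have f: "f \<in> (S - {y}) \<rightarrow>\<^sub>E K" using pR unfolding p by (rule SigmaD1)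
      have i: "i \<in> K - {f x}" using pR unfolding p by (rule SigmaD2)
      have "f(y := i) \<in> S \<rightarrow>\<^sub>E K" using upd_in_PiE[OF f _ xy(2)] i by blast
      moreover have "(f(y := i)) x \<noteq> (f(y := i)) y" using i xy(3) by auto
      ultimately show "c \<in> ?L" unfolding c p by simp
    qed
  qed
  then have "card ?L = card ?R" by (rule bij_betw_same_card)
  also have "\<dots> = (\<Sum>f\<in>(S - {y}) \<rightarrow>\<^sub>E K. card (K - {f x}))"
    by (rule card_SigmaI) (use fS fK in \<open>auto intro: finite_PiE\<close>)
  also have "\<dots> = (\<Sum>f\<in>(S - {y}) \<rightarrow>\<^sub>E K. card K - 1)"
  proof (rule sum.cong)
    fix f assume "f \<in> (S - {y}) \<rightarrow>\<^sub>E K"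
    then have "f x \<in> K" using xy by (meson Diff_iff PiE_mem singletonD)
    then show "card (K - {f x}) = card K - 1" using fK by simp
  qed simp
  also have "\<dots> = card ((S - {y}) \<rightarrow>\<^sub>E K) * (card K - 1)" by simp
  also have "card ((S - {y}) \<rightarrow>\<^sub>E K) = card K ^ (card S - 1)"
    using fS xy by (simp add: card_PiE)
  finally show ?thesis by simp
qed



lemma card_eq_avoid:
  assumes fS: "finite S" and xy: "x \<in> S" "y \<in> S" "x \<noteq> y" and fK: "finite K"
  shows "card {c \<in> S \<rightarrow>\<^sub>E K. c x = c y \<and> (\<forall>z\<in>S - {x, y}. c z \<noteq> c x)}
     = card K * (card K - 1) ^ (card S - 2)"
proof -
  define M where "M = S - {x, y}"
  have xM: "x \<notin> M" and yM: "y \<notin> M" unfolding M_def by auto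
  let ?L = "{c \<in> S \<rightarrow>\<^sub>E K. c x = c y \<and> (\<forall>z\<in>M. c z \<noteq> c x)}"
  let ?R = "SIGMA i:K. M \<rightarrow>\<^sub>E (K - {i})"
  let ?f = "\<lambda>c. (c x, restrict c M)"
  let ?g = "\<lambda>p. (snd p)(x := fst p, y := fst p)"
  have "bij_betw ?f ?L ?R"
  proof (rule bij_betw_byWitness[where f' = ?g])
    show "\<forall>c\<in>?L. ?g (?f c) = c"
    proof
      fix c assume cL: "c \<in> ?L"
      have c: "c \<in> S \<rightarrow>\<^sub>E K" "c x = c y" using cL by (simp_all only: mem_Collect_eq)
      show "?g (?f c) = c"
      proof
        fix z
        show "?g (?f c) z = c z"
        proof (cases "z = x \<or> z = y")
          case True
          then show ?thesis using c(2) by auto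
        next
          case False
          show ?thesis
          proof (cases "z \<in> S")
            case True
            then have "z \<in> M" using False unfolding M_def by simp
            then show ?thesis using False by simp
          next
            case zS: False
            then have "z \<notin> M" unfolding M_def by simp
            then show ?thesis using False zS PiE_arb[OF c(1) zS] by simp
          qed
        qed
      qed
    qed
    show "\<forall>p\<in>?R. ?f (?g p) = p"
    proof
      fix p assume pR: "p \<in> ?R"
      obtain i f where p: "p = (i, f)" by (cases p)
      have f: "f \<in> M \<rightarrow>\<^sub>E (K - {i})" using pR unfolding p by (rule SigmaD2)
      have "restrict (f(x := i, y := i)) M = restrict f M" using xM yM by simp
      also have "\<dots> = f" using f by simp
      finally show "?f (?g p) = p" unfolding p by simp
    qed
    show "?f ` ?L \<subseteq> ?R"
    proof
      fix p assume "p \<in> ?f ` ?L"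
      then obtain c where cL: "c \<in> ?L" and p: "p = ?f c" by (rule imageE)
      have cc: "c \<in> S \<rightarrow>\<^sub>E K \<and> c x = c y \<and> (\<forall>z\<in>M. c z \<noteq> c x)" using cL by (rule CollectD)
      note c = cc[THEN conjunct1] cc[THEN conjunct2, THEN conjunct2]
      have cx: "c x \<in> K" using c(1) xy(1) by (rule PiE_mem)
      have "restrict c M \<in> M \<rightarrow>\<^sub>E (K - {c x})"
        unfolding restrict_PiE_iff
      proof
        fix z assume z: "z \<in> M"
        then have "z \<in> S" unfolding M_def by simp
        then have "c z \<in> K" by (rule PiE_mem[OF c(1)])
        then show "c z \<in> K - {c x}" using c(2) z by simp
      qed
      then show "p \<in> ?R" unfolding p using cx by (rule SigmaI[rotated])
    qed
    show "?g ` ?R \<subseteq> ?L"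
    proof
      fix c assume "c \<in> ?g ` ?R"
      then obtain p where pR: "p \<in> ?R" and c: "c = ?g p" by (rule imageE)
      obtain i f where p: "p = (i, f)" by (cases p)
      have i: "i \<in> K" using pR unfolding p by (rule SigmaD1)
      have f: "f \<in> M \<rightarrow>\<^sub>E (K - {i})" using pR unfolding p by (rule SigmaD2)
      have "f(x := i, y := i) \<in> S \<rightarrow>\<^sub>E K"
      proof (rule PiE_I)
        fix z assume z: "z \<in> S"
        show "(f(x := i, y := i)) z \<in> K"
        proof (cases "z = x \<or> z = y")
          case True
          then show ?thesis using i by auto
        next
          case False
          then have "z \<in> M" using z unfolding M_def by simp
          then have "f z \<in> K - {i}" by (rule PiE_mem[OF f])
          then show ?thesis using False by simp
        qed
      next
        fix z assume z: "z \<notin> S"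
        then have "z \<notin> M" "z \<noteq> x" "z \<noteq> y" unfolding M_def using xy by auto
        then show "(f(x := i, y := i)) z = undefined" using PiE_arb[OF f] by simp
      qed
      moreover have "\<forall>z\<in>M. (f(x := i, y := i)) z \<noteq> (f(x := i, y := i)) x"
      proof
        fix z assume z: "z \<in> M"
        then have "f z \<in> K - {i}" by (rule PiE_mem[OF f])
        then show "(f(x := i, y := i)) z \<noteq> (f(x := i, y := i)) x" using z xM yM xy(3)
          by (cases "z = x \<or> z = y") auto
      qed
      ultimately show "c \<in> ?L" unfolding c p using xy(3) by simp
    qed
  qed
  then have "card ?L = card ?R" by (rule bij_betw_same_card)
  also have "\<dots> = (\<Sum>i\<in>K. card (M \<rightarrow>\<^sub>E (K - {i})))"
    by (rule card_SigmaI) (use fS fK in \<open>auto simp: M_def intro: finite_PiE\<close>)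
  also have "\<dots> = (\<Sum>i\<in>K. (card K - 1) ^ (card S - 2))"
  proof (rule sum.cong)
    fix i assume "i \<in> K"
    moreover have "card M = card S - 2" unfolding M_def using fS xy by (simp add: card_Diff_subset)
    moreover have "finite M" unfolding M_def using fS by simp
    ultimately show "card (M \<rightarrow>\<^sub>E (K - {i})) = (card K - 1) ^ (card S - 2)"
      using fK by (simp add: card_PiE)
  qed simp
  also have "\<dots> = card K * (card K - 1) ^ (card S - 2)" by simp
  finally show ?thesis unfolding M_def .
qed



definition PC :: "'a set \<Rightarrow> 'a rel \<Rightarrow> nat \<Rightarrow> ('a \<Rightarrow> nat) set" where
  "PC V A k = {c \<in> V \<rightarrow>\<^sub>E {1..k}. proper_coloring V A k c}"

lemma chrom_PC: "chrom_poly V A k = card (PC V A k)"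
  unfolding chrom_poly_def PC_def ..

lemma finite_PC: "finite V \<Longrightarrow> finite (PC V A k)"
  unfolding PC_def by (rule finite_subset[of _ "V \<rightarrow>\<^sub>E {1..k}"]) (auto intro: finite_PiE)

lemma PC_sub_PiE: "PC V A k \<subseteq> V \<rightarrow>\<^sub>E {1..k}"
  unfolding PC_def by blast

lemma proper_restrict:
  assumes T: "tournament V A" and v: "v \<in> V" and P: "proper_coloring V A k c"
  shows "proper_coloring (V - {v}) (A \<inter> (V - {v}) \<times> (V - {v})) k (c(v := undefined))"
proof -
  let ?S = "V - {v}"
  have TS: "tournament ?S (A \<inter> ?S \<times> ?S)" using tourn_sub[OF T] by blast
  have P': "(\<forall>z\<in>V. c z \<in> {1..k}) \<and> (\<forall>a b d. tri A a b d \<longrightarrow> \<not> (c a = c b \<and> c b = c d))"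
    using P proper_iff[OF T] by blast
  show ?thesis unfolding proper_iff[OF TS]
  proof (intro conjI allI impI)
    show "\<forall>z\<in>?S. (c(v := undefined)) z \<in> {1..k}" using P' by simp
    fix a b d assume t: "tri (A \<inter> ?S \<times> ?S) a b d"
    then have "tri A a b d" "a \<noteq> v" "b \<noteq> v" "d \<noteq> v" unfolding tri_def by auto
    then show "\<not> ((c(v := undefined)) a = (c(v := undefined)) b \<and> (c(v := undefined)) b = (c(v := undefined)) d)"
      using P' by simp
  qed
qed

lemma chrom_split:
  assumes T: "tournament V A" and fin: "finite V" and v: "v \<in> V"
  shows "chrom_poly V A k = (\<Sum>c\<in>PC (V - {v}) (A \<inter> (V - {v}) \<times> (V - {v})) k.
            card {i \<in> {1..k}. proper_coloring V A k (c(v := i))})"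
proof -
  let ?S = "V - {v}"
  let ?PS = "PC ?S (A \<inter> ?S \<times> ?S) k"
  let ?G = "\<lambda>c. {i \<in> {1..k}. proper_coloring V A k (c(v := i))}"
  let ?R = "SIGMA c:?PS. ?G c"
  let ?f = "\<lambda>c. (c(v := undefined), c v)"
  let ?g = "\<lambda>p. (fst p)(v := snd p)"
  have "bij_betw ?f (PC V A k) ?R"
  proof (rule bij_betw_byWitness[where f' = ?g])
    show "\<forall>c\<in>PC V A k. ?g (?f c) = c" by simp
    show "\<forall>p\<in>?R. ?f (?g p) = p"
    proof
      fix p assume pR: "p \<in> ?R"
      obtain c i where p: "p = (c, i)" by (cases p)
      have "c \<in> ?PS" using pR unfolding p by (rule SigmaD1)
      then have c: "c \<in> ?S \<rightarrow>\<^sub>E {1..k}" using PC_sub_PiE by blast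
      have cv: "c v = undefined" by (rule PiE_arb[OF c]) simp
      have "(c(v := i))(v := undefined) = c(v := undefined)" by simp
      also have "\<dots> = c" by (rule fun_upd_idem[of c v undefined, OF cv])
      finally have upd: "(c(v := i))(v := undefined) = c" .
      show "?f (?g p) = p" using upd unfolding p by simp
    qed
    show "?f ` PC V A k \<subseteq> ?R"
    proof
      fix p assume "p \<in> ?f ` PC V A k"
      then obtain c where cP: "c \<in> PC V A k" and p: "p = ?f c" by (rule imageE)
      have cc: "c \<in> V \<rightarrow>\<^sub>E {1..k} \<and> proper_coloring V A k c" using cP unfolding PC_def by (rule CollectD)
      note c = cc[THEN conjunct1] cc[THEN conjunct2]
      have "c(v := undefined) \<in> ?S \<rightarrow>\<^sub>E {1..k}" by (rule del_in_PiE[OF c(1)])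
      moreover have "proper_coloring ?S (A \<inter> ?S \<times> ?S) k (c(v := undefined))"
        by (rule proper_restrict[OF T v c(2)])
      ultimately have "c(v := undefined) \<in> ?PS" unfolding PC_def by blast
      moreover have "c v \<in> ?G (c(v := undefined))"
      proof -
        have "c v \<in> {1..k}" using c(1) v by (rule PiE_mem)
        moreover have "(c(v := undefined))(v := c v) = c" by simp
        ultimately show ?thesis using c(2) by simp
      qed
      ultimately show "p \<in> ?R" unfolding p mem_Sigma_iff by (rule conjI)
    qed
    show "?g ` ?R \<subseteq> PC V A k"
    proof
      fix c' assume "c' \<in> ?g ` ?R"
      then obtain p where pR: "p \<in> ?R" and c': "c' = ?g p" by (rule imageE)
      obtain c i where p: "p = (c, i)" by (cases p)
      have "c \<in> ?PS" using pR unfolding p by (rule SigmaD1)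
      then have c: "c \<in> ?S \<rightarrow>\<^sub>E {1..k}" using PC_sub_PiE by blast
      have i: "i \<in> ?G c" using pR unfolding p by (rule SigmaD2)
      have "c(v := i) \<in> V \<rightarrow>\<^sub>E {1..k}" using upd_in_PiE[OF c _ v] i by blast
      then show "c' \<in> PC V A k" using i unfolding c' p PC_def by simp
    qed
  qed
  then have "card (PC V A k) = card ?R" by (rule bij_betw_same_card)
  also have "\<dots> = (\<Sum>c\<in>?PS. card (?G c))"
    by (rule card_SigmaI) (use fin in \<open>simp_all add: finite_PC\<close>)
  finally show ?thesis unfolding chrom_PC .
qed

lemma G_le: "card {i \<in> {1..k}. P i} \<le> k"
proof -
  have "card {i \<in> {1..k}. P i} \<le> card {1..k}" by (rule card_mono) auto
  then show ?thesis by simp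
qed

lemma G_le_tri:
  assumes T: "tournament V A" and v: "v \<in> V" and t: "tri A v x y"
    and cx: "c x \<in> {1..k}" and eq: "c x = c y"
  shows "card {i \<in> {1..k}. proper_coloring V A k (c(v := i))} \<le> k - 1"
proof -
  have xv: "x \<noteq> v" "y \<noteq> v" using t tourn_irr[OF T] unfolding tri_def by auto
  have "{i \<in> {1..k}. proper_coloring V A k (c(v := i))} \<subseteq> {1..k} - {c x}"
  proof
    fix i assume i: "i \<in> {i \<in> {1..k}. proper_coloring V A k (c(v := i))}"
    then have P: "proper_coloring V A k (c(v := i))" by simp
    have "i \<noteq> c x"
    proof
      assume "i = c x"
      then have "(c(v := i)) v = (c(v := i)) x \<and> (c(v := i)) x = (c(v := i)) y" using xv eq by simp
      then show False using P t proper_iff[OF T] by blast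
    qed
    then show "i \<in> {1..k} - {c x}" using i by simp
  qed
  then have "card {i \<in> {1..k}. proper_coloring V A k (c(v := i))} \<le> card ({1..k} - {c x})"
    by (rule card_mono[rotated]) simp
  also have "\<dots> = k - 1" using cx by simp
  finally show ?thesis .
qed

lemma step_bound:
  assumes T: "tournament V A" and fin: "finite V" and v: "v \<in> V" and t: "tri A v x y"
    and k: "k \<ge> 1"
  defines "S \<equiv> V - {v}"
  defines "B \<equiv> \<lambda>c::'a \<Rightarrow> nat. (k - 1) + (if c x \<noteq> c y then 1 else 0)"
  shows "\<forall>c\<in>PC S (A \<inter> S \<times> S) k. card {i \<in> {1..k}. proper_coloring V A k (c(v := i))} \<le> B c"
    and "(\<Sum>c\<in>PC S (A \<inter> S \<times> S) k. B c) =
           (k - 1) * chrom_poly S (A \<inter> S \<times> S) k + card {c \<in> PC S (A \<inter> S \<times> S) k. c x \<noteq> c y}"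
proof -
  have xS: "x \<in> S" using t T unfolding tri_def S_def by (auto dest: tourn_in tourn_irr)
  show "\<forall>c\<in>PC S (A \<inter> S \<times> S) k. card {i \<in> {1..k}. proper_coloring V A k (c(v := i))} \<le> B c"
  proof
    fix c assume c: "c \<in> PC S (A \<inter> S \<times> S) k"
    show "card {i \<in> {1..k}. proper_coloring V A k (c(v := i))} \<le> B c"
    proof (cases "c x = c y")
      case True
      have "c \<in> S \<rightarrow>\<^sub>E {1..k}" using c PC_sub_PiE by blast
      then have "c x \<in> {1..k}" using xS by (rule PiE_mem)
      then show ?thesis using G_le_tri[OF T v t _ True] True unfolding B_def by simp
    next
      case False
      then show ?thesis using G_le unfolding B_def using k by simp
    qed
  qed
  have fPS: "finite (PC S (A \<inter> S \<times> S) k)" using fin unfolding S_def by (simp add: finite_PC)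
  have "(\<Sum>c\<in>PC S (A \<inter> S \<times> S) k. B c) = (\<Sum>c\<in>PC S (A \<inter> S \<times> S) k. (k - 1))
      + (\<Sum>c\<in>PC S (A \<inter> S \<times> S) k. (if c x \<noteq> c y then 1 else 0))"
    unfolding B_def by (rule sum.distrib)
  also have "(\<Sum>c\<in>PC S (A \<inter> S \<times> S) k. (if c x \<noteq> c y then 1 else 0)) = card {c \<in> PC S (A \<inter> S \<times> S) k. c x \<noteq> c y}"
    using sum.inter_filter[OF fPS, of "\<lambda>_. 1::nat" "\<lambda>c. c x \<noteq> c y"] by simp
  finally show "(\<Sum>c\<in>PC S (A \<inter> S \<times> S) k. B c) =
           (k - 1) * chrom_poly S (A \<inter> S \<times> S) k + card {c \<in> PC S (A \<inter> S \<times> S) k. c x \<noteq> c y}"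
    unfolding chrom_PC by (simp add: mult.commute)
qed



definition Q :: "nat \<Rightarrow> nat \<Rightarrow> nat" where
  "Q k n = (k - 1) * k ^ (n - 1) + k * (k - 1) ^ (n - 2)"

lemma Q_rec:
  assumes "k \<ge> 1" "m \<ge> 2"
  shows "Q k (Suc m) = (k - 1) * Q k m + (k - 1) * k ^ (m - 1)"
proof -
  obtain s where k: "k = Suc s" using assms(1) by (cases k) auto
  obtain j where m: "m = Suc (Suc j)" using assms(2) by (metis add_2_eq_Suc le_Suc_ex)
  show ?thesis unfolding Q_def k m by (simp add: algebra_simps)
qed

lemma Q2: "k \<ge> 1 \<Longrightarrow> Q k 2 = k ^ 2"
  unfolding Q_def by (cases k) (auto simp: algebra_simps power2_eq_square)

lemma chrom_le_all: "finite V \<Longrightarrow> chrom_poly V A k \<le> k ^ card V"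
proof -
  assume fin: "finite V"
  have "chrom_poly V A k \<le> card (V \<rightarrow>\<^sub>E {1..k})" unfolding chrom_PC
    by (rule card_mono[OF _ PC_sub_PiE]) (use fin in \<open>auto intro: finite_PiE\<close>)
  also have "\<dots> = k ^ card V" using fin by (simp add: card_PiE)
  finally show ?thesis .
qed

lemma tri_in:
  assumes T: "tournament V A" and t: "tri A a b d"
  shows "a \<in> V" "b \<in> V" "d \<in> V" "a \<noteq> b" "b \<noteq> d" "d \<noteq> a"
  using t tourn_in[OF T] tourn_irr[OF T] unfolding tri_def by metis+

lemma step_total:
  assumes T: "tournament V A" and fin: "finite V" and v: "v \<in> V" and t: "tri A v x y"
    and k: "k \<ge> 1"
  shows "chrom_poly V A k \<le> (k - 1) * chrom_poly (V - {v}) (A \<inter> (V - {v}) \<times> (V - {v})) k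
          + (k - 1) * k ^ (card (V - {v}) - 1)"
proof -
  let ?S = "V - {v}"
  let ?PS = "PC ?S (A \<inter> ?S \<times> ?S) k"
  let ?G = "\<lambda>c. card {i \<in> {1..k}. proper_coloring V A k (c(v := i))}"
  let ?B = "\<lambda>c::'a \<Rightarrow> nat. (k - 1) + (if c x \<noteq> c y then 1 else 0)"
  have xy: "x \<in> ?S" "y \<in> ?S" "x \<noteq> y" using tri_in[OF T t] by auto
  have fS: "finite ?S" using fin by simp
  have "chrom_poly V A k = (\<Sum>c\<in>?PS. ?G c)" by (rule chrom_split[OF T fin v])
  also have "\<dots> \<le> (\<Sum>c\<in>?PS. ?B c)" by (rule sum_mono) (use step_bound(1)[OF T fin v t k] in blast)
  also have "\<dots> = (k - 1) * chrom_poly ?S (A \<inter> ?S \<times> ?S) k + card {c \<in> ?PS. c x \<noteq> c y}"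
    by (rule step_bound(2)[OF T fin v t k])
  also have "card {c \<in> ?PS. c x \<noteq> c y} \<le> card {c \<in> ?S \<rightarrow>\<^sub>E {1..k}. c x \<noteq> c y}"
  proof (rule card_mono)
    show "finite {c \<in> ?S \<rightarrow>\<^sub>E {1..k}. c x \<noteq> c y}"
      by (rule finite_subset[of _ "?S \<rightarrow>\<^sub>E {1..k}"]) (use fS in \<open>auto intro: finite_PiE\<close>)
    show "{c \<in> ?PS. c x \<noteq> c y} \<subseteq> {c \<in> ?S \<rightarrow>\<^sub>E {1..k}. c x \<noteq> c y}"
      using PC_sub_PiE[of ?S "A \<inter> ?S \<times> ?S" k] by blast
  qed
  also have "\<dots> = (k - 1) * k ^ (card ?S - 1)" using card_neq[OF fS xy, of "{1..k}"] by simp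
  finally show ?thesis by simp
qed



declare PiE_E [rule del]

lemma c0_exists:
  fixes k :: nat and c0 :: "'a \<Rightarrow> nat"
  assumes xy: "x \<in> S" "y \<in> S" "x \<noteq> y" and nt: "\<not> (x \<in> t \<and> y \<in> t)" and k: "k \<ge> 2"
  shows "\<exists>c0 \<in> S \<rightarrow>\<^sub>E {1..k}. c0 x \<noteq> c0 y \<and> (\<forall>z\<in>t \<inter> S. c0 z = 1)"
proof -
  define u where "u = (if x \<in> t then y else x)"
  define c0 where "c0 = restrict (\<lambda>z. if z = u then 2 else (1::nat)) S"
  have "c0 \<in> S \<rightarrow>\<^sub>E {1..k}" unfolding c0_def restrict_PiE_iff using k by auto
  moreover have "c0 x \<noteq> c0 y" unfolding c0_def u_def using xy by auto
  moreover have "\<forall>z\<in>t \<inter> S. c0 z = 1" unfolding c0_def u_def using nt by auto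
  ultimately show ?thesis by blast
qed

lemma step_strict:
  assumes T: "tournament V A" and fin: "finite V" and v: "v \<in> V" and t: "tri A v x y"
    and k: "k \<ge> 2" and bad: "tri A a b d" "\<not> (x \<in> {a, b, d} \<and> y \<in> {a, b, d})"
  shows "chrom_poly V A k < (k - 1) * chrom_poly (V - {v}) (A \<inter> (V - {v}) \<times> (V - {v})) k
          + (k - 1) * k ^ (card (V - {v}) - 1)"
proof -
  let ?S = "V - {v}"
  let ?AS = "A \<inter> ?S \<times> ?S"
  let ?PS = "PC ?S ?AS k"
  let ?G = "\<lambda>c. card {i \<in> {1..k}. proper_coloring V A k (c(v := i))}"
  let ?B = "\<lambda>c::'a \<Rightarrow> nat. (k - 1) + (if c x \<noteq> c y then 1 else 0)"
  have k1: "k \<ge> 1" using k by simp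
  have xy: "x \<in> ?S" "y \<in> ?S" "x \<noteq> y" using tri_in[OF T t] by auto
  have fS: "finite ?S" using fin by simp
  have TS: "tournament ?S ?AS" using tourn_sub[OF T] by blast
  have fPS: "finite ?PS" using fS by (rule finite_PC)
  have split: "chrom_poly V A k = (\<Sum>c\<in>?PS. ?G c)" by (rule chrom_split[OF T fin v])
  have B1: "\<forall>c\<in>?PS. ?G c \<le> ?B c" by (rule step_bound(1)[OF T fin v t k1])
  have B2: "(\<Sum>c\<in>?PS. ?B c) = (k - 1) * chrom_poly ?S ?AS k + card {c \<in> ?PS. c x \<noteq> c y}"
    by (rule step_bound(2)[OF T fin v t k1])
  have finAll: "finite {c \<in> ?S \<rightarrow>\<^sub>E {1..k}. c x \<noteq> c y}"
    by (rule finite_subset[of _ "?S \<rightarrow>\<^sub>E {1..k}"]) (use fS in \<open>auto intro: finite_PiE\<close>)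
  have subAll: "{c \<in> ?PS. c x \<noteq> c y} \<subseteq> {c \<in> ?S \<rightarrow>\<^sub>E {1..k}. c x \<noteq> c y}"
  proof (rule subsetI)
    fix c assume "c \<in> {c \<in> ?PS. c x \<noteq> c y}"
    then show "c \<in> {c \<in> ?S \<rightarrow>\<^sub>E {1..k}. c x \<noteq> c y}" using PC_sub_PiE[of ?S ?AS k] by (simp add: subset_iff)
  qed
  have cAll: "card {c \<in> ?S \<rightarrow>\<^sub>E {1..k}. c x \<noteq> c y} = (k - 1) * k ^ (card ?S - 1)"
    using card_neq[OF fS xy, of "{1..k}"] by simp
  show ?thesis
  proof (cases "\<exists>a b d. tri ?AS a b d \<and> \<not> (x \<in> {a, b, d} \<and> y \<in> {a, b, d})")
    case True
    then obtain a' b' d' where t': "tri ?AS a' b' d'" and nt': "\<not> (x \<in> {a', b', d'} \<and> y \<in> {a', b', d'})"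
      by blast
    obtain c0 where c0: "c0 \<in> ?S \<rightarrow>\<^sub>E {1..k}" "c0 x \<noteq> c0 y" "\<forall>z\<in>{a', b', d'} \<inter> ?S. c0 z = 1"
      using c0_exists[OF xy nt' k] by blast
    have inS: "a' \<in> ?S" "b' \<in> ?S" "d' \<in> ?S" using tri_in[OF TS t'] by auto
    have "\<not> proper_coloring ?S ?AS k c0"
    proof
      assume "proper_coloring ?S ?AS k c0"
      then have "\<forall>a b d. tri ?AS a b d \<longrightarrow> \<not> (c0 a = c0 b \<and> c0 b = c0 d)"
        using proper_iff[OF TS] by blast
      moreover have "c0 a' = c0 b' \<and> c0 b' = c0 d'" using c0(3) inS by simp
      ultimately show False using t' by blast
    qed
    then have "c0 \<notin> {c \<in> ?PS. c x \<noteq> c y}" unfolding PC_def by blast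
    moreover have "c0 \<in> {c \<in> ?S \<rightarrow>\<^sub>E {1..k}. c x \<noteq> c y}" using c0 by blast
    ultimately have "{c \<in> ?PS. c x \<noteq> c y} \<subset> {c \<in> ?S \<rightarrow>\<^sub>E {1..k}. c x \<noteq> c y}"
      using subAll by blast
    then have lt: "card {c \<in> ?PS. c x \<noteq> c y} < (k - 1) * k ^ (card ?S - 1)"
      using psubset_card_mono[OF finAll] cAll by simp
    have "chrom_poly V A k \<le> (\<Sum>c\<in>?PS. ?B c)" unfolding split by (rule sum_mono) (use B1 in blast)
    then show ?thesis using B2 lt by simp
  next
    case False
    have allS: "x \<in> {a, b, d} \<and> y \<in> {a, b, d}" if "tri ?AS a b d" for a b d
      using False that by blast
    have abd: "a \<in> V" "b \<in> V" "d \<in> V" using tri_in[OF T bad(1)] by auto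
    have "v \<in> {a, b, d}"
    proof (rule ccontr)
      assume "v \<notin> {a, b, d}"
      then have "tri ?AS a b d" using bad(1) abd unfolding tri_def by auto
      then show False using allS bad(2) by blast
    qed
    have "\<exists>p q. tri A v p q \<and> \<not> (x \<in> {v, p, q} \<and> y \<in> {v, p, q})"
    proof -
      consider "v = a" | "v = b" | "v = d" using \<open>v \<in> {a, b, d}\<close> by blast
      then show ?thesis
      proof cases
        case 1
        then show ?thesis using bad by blast
      next
        case 2
        have "tri A b d a" using bad(1) by (rule tri_rot)
        moreover have "{b, d, a} = {a, b, d}" by blast
        ultimately show ?thesis using bad(2) 2 by metis
      next
        case 3
        have "tri A d a b" using tri_rot[OF tri_rot[OF bad(1)]] .
        moreover have "{d, a, b} = {a, b, d}" by blast
        ultimately show ?thesis using bad(2) 3 by metis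
      qed
    qed
    then obtain p q where pq: "tri A v p q" "\<not> (x \<in> {v, p, q} \<and> y \<in> {v, p, q})"
      by blast
    have xyv: "x \<noteq> v" "y \<noteq> v" using xy by auto
    have pq2: "\<not> (x \<in> {p, q} \<and> y \<in> {p, q})" using pq(2) by auto
    have pqS: "p \<in> ?S" "q \<in> ?S" using tri_in[OF T pq(1)] by auto
    obtain c0 where c0: "c0 \<in> ?S \<rightarrow>\<^sub>E {1..k}" "c0 x \<noteq> c0 y" "\<forall>z\<in>{p, q} \<inter> ?S. c0 z = 1"
      using c0_exists[OF xy pq2 k] by blast
    have "proper_coloring ?S ?AS k c0"
      unfolding proper_iff[OF TS]
    proof (intro conjI allI impI)
      show "\<forall>z\<in>?S. c0 z \<in> {1..k}" using PiE_mem[OF c0(1)] by blast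
      fix a' b' d' assume t': "tri ?AS a' b' d'"
      then have "x \<in> {a', b', d'} \<and> y \<in> {a', b', d'}" by (rule allS)
      then show "\<not> (c0 a' = c0 b' \<and> c0 b' = c0 d')" using c0(2) by auto
    qed
    then have c0PS: "c0 \<in> ?PS" unfolding PC_def using c0(1) by blast
    have "c0 p \<in> {1..k}" using c0(1) pqS(1) by (rule PiE_mem)
    moreover have "c0 p = c0 q" using c0(3) pqS by simp
    ultimately have "?G c0 \<le> k - 1" by (rule G_le_tri[OF T v pq(1)])
    then have "?G c0 < ?B c0" using c0(2) k by simp
    then have "(\<Sum>c\<in>?PS. ?G c) < (\<Sum>c\<in>?PS. ?B c)"
      using sum_strict_mono_ex1[OF fPS B1] c0PS by blast
    moreover have "card {c \<in> ?PS. c x \<noteq> c y} \<le> (k - 1) * k ^ (card ?S - 1)"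
      using card_mono[OF finAll subAll] cAll by simp
    ultimately show ?thesis using split B2 by simp
  qed
qed

lemma choose_v:
  assumes T: "tournament V A" and SC: "strongly_connected V A" and fin: "finite V" and c3: "card V \<ge> 3"
  shows "\<exists>v\<in>V. card (V - {v}) = 2 \<or> strongly_connected (V - {v}) (A \<inter> (V - {v}) \<times> (V - {v}))"
proof (cases "card V = 3")
  case True
  have "V \<noteq> {}" using c3 by auto
  then obtain v where "v \<in> V" by blast
  then show ?thesis using True fin by auto
next
  case False
  then show ?thesis using strong_minus_vertex[OF T SC fin] c3 by fastforce
qed

lemma bound:
  assumes k: "k \<ge> 1"
  shows "m \<ge> 2 \<Longrightarrow> tournament V A \<Longrightarrow> finite V \<Longrightarrow> card V = m \<Longrightarrow>
     (m = 2 \<or> strongly_connected V A) \<Longrightarrow> chrom_poly V A k \<le> Q k m"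
proof (induction m arbitrary: V A rule: less_induct)
  case (less m)
  show ?case
  proof (cases "m = 2")
    case True
    then show ?thesis using chrom_le_all[OF less.prems(3), of A k] less.prems(4) Q2[OF k] by simp
  next
    case False
    then have m3: "m \<ge> 3" and SC: "strongly_connected V A" using less.prems by auto
    obtain v where v: "v \<in> V" and vS: "card (V - {v}) = 2 \<or> strongly_connected (V - {v}) (A \<inter> (V - {v}) \<times> (V - {v}))"
      using choose_v[OF less.prems(2) SC less.prems(3)] m3 less.prems(4) by auto
    let ?S = "V - {v}"
    have cS: "card ?S = m - 1" using v less.prems(3,4) by simp
    have TS: "tournament ?S (A \<inter> ?S \<times> ?S)" using tourn_sub[OF less.prems(2)] by blast
    have IH: "chrom_poly ?S (A \<inter> ?S \<times> ?S) k \<le> Q k (m - 1)"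
      using less.IH[of "m - 1" ?S "A \<inter> ?S \<times> ?S"] m3 TS less.prems(3) cS vS by simp
    have "card ?S \<noteq> 0" using cS m3 by simp
    then have "?S \<noteq> {}" by (metis card.empty)
    then obtain w where w: "w \<in> V" "w \<noteq> v" by blast
    obtain x y where t: "tri A v x y" using vertex_on_tri[OF less.prems(2) SC v w] by blast
    have "chrom_poly V A k \<le> (k - 1) * chrom_poly ?S (A \<inter> ?S \<times> ?S) k + (k - 1) * k ^ (card ?S - 1)"
      by (rule step_total[OF less.prems(2,3) v t k])
    also have "\<dots> \<le> (k - 1) * Q k (m - 1) + (k - 1) * k ^ (m - 1 - 1)"
      using IH cS by simp
    also have "\<dots> = Q k (Suc (m - 1))" using Q_rec[OF k, of "m - 1"] m3 by simp
    also have "Suc (m - 1) = m" using m3 by simp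
    finally show ?thesis .
  qed
qed



declare PiE_I [rule del]

lemma D_tourn: "tournament {1..n} (D_arcs n)"
  unfolding tournament_def D_arcs_def by auto

lemma D_mem: "(i, j) \<in> D_arcs n \<Longrightarrow> 1 \<le> i \<and> i \<le> n \<and> 1 \<le> j \<and> j \<le> n \<and> ((i < j \<and> \<not> (i = 1 \<and> j = n)) \<or> (i = n \<and> j = 1 \<and> 1 < n))"
  unfolding D_arcs_def by auto

lemma D_tri:
  assumes "tri (D_arcs n) a b d"
  shows "(a = n \<and> b = 1 \<and> 1 < d \<and> d < n) \<or> (b = n \<and> d = 1 \<and> 1 < a \<and> a < n) \<or> (d = n \<and> a = 1 \<and> 1 < b \<and> b < n)"
proof -
  have "(a, b) \<in> D_arcs n" "(b, d) \<in> D_arcs n" "(d, a) \<in> D_arcs n" using assms unfolding tri_def by auto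
  then have "1 \<le> a \<and> a \<le> n \<and> 1 \<le> b \<and> b \<le> n \<and> ((a < b \<and> \<not> (a = 1 \<and> b = n)) \<or> (a = n \<and> b = 1 \<and> 1 < n))"
    "1 \<le> b \<and> b \<le> n \<and> 1 \<le> d \<and> d \<le> n \<and> ((b < d \<and> \<not> (b = 1 \<and> d = n)) \<or> (b = n \<and> d = 1 \<and> 1 < n))"
    "1 \<le> d \<and> d \<le> n \<and> 1 \<le> a \<and> a \<le> n \<and> ((d < a \<and> \<not> (d = 1 \<and> a = n)) \<or> (d = n \<and> a = 1 \<and> 1 < n))"
    using D_mem by blast+
  then show ?thesis by presburger
qed

lemma Dn_lower:
  assumes n: "n \<ge> 2" and k: "k \<ge> 1"
  shows "Q k n \<le> chrom_poly {1..n} (D_arcs n) k"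
proof -
  let ?V = "{1..n}"
  let ?K = "{1..k}"
  let ?A1 = "{c \<in> ?V \<rightarrow>\<^sub>E ?K. c 1 \<noteq> c n}"
  let ?A2 = "{c \<in> ?V \<rightarrow>\<^sub>E ?K. c 1 = c n \<and> (\<forall>z\<in>?V - {1, n}. c z \<noteq> c 1)}"
  have V1: "1 \<in> ?V" "n \<in> ?V" "(1::nat) \<noteq> n" using n by auto
  have f: "finite ?V" "finite ?K" by simp_all
  have c1: "card ?A1 = (k - 1) * k ^ (n - 1)" using card_neq[OF f(1) V1, of ?K] by simp
  have c2: "card ?A2 = k * (k - 1) ^ (n - 2)" using card_eq_avoid[OF f(1) V1, of ?K] by simp
  have fP: "finite (?V \<rightarrow>\<^sub>E ?K)" by (simp add: finite_PiE)
  have fA1: "finite ?A1" by (rule finite_subset[OF _ fP]) blast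
  have fA2: "finite ?A2" by (rule finite_subset[OF _ fP]) blast
  note fA = fA1 fA2
  have disj: "?A1 \<inter> ?A2 = {}" by blast
  have sub: "?A1 \<union> ?A2 \<subseteq> PC ?V (D_arcs n) k"
  proof
    fix c assume c: "c \<in> ?A1 \<union> ?A2"
    then have cP: "c \<in> ?V \<rightarrow>\<^sub>E ?K" by blast
    have "proper_coloring ?V (D_arcs n) k c"
      unfolding proper_iff[OF D_tourn]
    proof (intro conjI allI impI)
      show "\<forall>z\<in>?V. c z \<in> ?K" using PiE_mem[OF cP] by blast
      fix a b d assume t: "tri (D_arcs n) a b d"
      show "\<not> (c a = c b \<and> c b = c d)"
      proof
        assume eq: "c a = c b \<and> c b = c d"
        have "\<exists>z\<in>?V - {1, n}. c 1 = c n \<and> c z = c 1"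
          using D_tri[OF t]
        proof (elim disjE conjE)
          assume "a = n" "b = 1" "1 < d" "d < n"
          then show ?thesis using eq by (intro bexI[of _ d]) auto
        next
          assume "b = n" "d = 1" "1 < a" "a < n"
          then show ?thesis using eq by (intro bexI[of _ a]) auto
        next
          assume "d = n" "a = 1" "1 < b" "b < n"
          then show ?thesis using eq by (intro bexI[of _ b]) auto
        qed
        then show False using c by auto
      qed
    qed
    then show "c \<in> PC ?V (D_arcs n) k" unfolding PC_def using cP by blast
  qed
  have "Q k n = card (?A1 \<union> ?A2)" unfolding Q_def using c1 c2 card_Un_disjoint[OF fA disj] by simp
  also have "\<dots> \<le> card (PC ?V (D_arcs n) k)" by (rule card_mono[OF finite_PC sub]) simp
  finally show ?thesis unfolding chrom_PC .
qed



lemma D_iff: "(i, j) \<in> D_arcs n \<longleftrightarrow> 1 \<le> i \<and> i \<le> n \<and> 1 \<le> j \<and> j \<le> n \<and> ((i < j \<and> \<not> (i = 1 \<and> j = n)) \<or> (i = n \<and> j = 1 \<and> 1 < n))"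
  unfolding D_arcs_def by auto

lemma D11: "(1, 1) \<notin> D_arcs n" unfolding D_iff by simp
lemma D1n: "n \<ge> 3 \<Longrightarrow> (1, n) \<notin> D_arcs n" unfolding D_iff by simp
lemma Dn1: "n \<ge> 3 \<Longrightarrow> (n, 1) \<in> D_arcs n" unfolding D_iff by simp
lemma D1m: "2 \<le> j \<Longrightarrow> j < n \<Longrightarrow> (1, j) \<in> D_arcs n" unfolding D_iff by linarith
lemma Dm1: "2 \<le> j \<Longrightarrow> j < n \<Longrightarrow> (j, 1) \<notin> D_arcs n" unfolding D_iff by linarith
lemma Dnn: "(n, n) \<notin> D_arcs n" unfolding D_iff by simp
lemma Dnm: "2 \<le> j \<Longrightarrow> j < n \<Longrightarrow> (n, j) \<notin> D_arcs n" unfolding D_iff by linarith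
lemma Dmn: "2 \<le> j \<Longrightarrow> j < n \<Longrightarrow> (j, n) \<in> D_arcs n" unfolding D_iff by linarith
lemma Dmm: "2 \<le> i \<Longrightarrow> i < n \<Longrightarrow> 2 \<le> j \<Longrightarrow> j < n \<Longrightarrow> (i, j) \<in> D_arcs n \<longleftrightarrow> i < j"
  unfolding D_iff by linarith


lemma iso_Dn:
  assumes T: "tournament V A" and fin: "finite V" and cV: "card V = n" and n3: "n \<ge> 3"
    and SC: "strongly_connected V A" and xy: "(x, y) \<in> A"
    and all: "\<forall>a b d. tri A a b d \<longrightarrow> x \<in> {a, b, d} \<and> y \<in> {a, b, d}"
  shows "digraph_iso V A {1..n} (D_arcs n)"
proof -
  have xyV: "x \<in> V" "y \<in> V" using tourn_in[OF T xy] by auto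
  have xny: "x \<noteq> y" using xy tourn_irr[OF T] by blast
  define M where "M = V - {x, y}"
  have finM: "finite M" unfolding M_def using fin by simp
  have cM: "card M = n - 2" unfolding M_def using fin xyV xny cV by (simp add: card_Diff_subset)
  have VM: "V = insert y (insert x M)" unfolding M_def using xyV by auto
  have xM: "x \<notin> M" and yM: "y \<notin> M" unfolding M_def by auto
  have Mstruct: "(y, z) \<in> A \<and> (z, x) \<in> A" if z: "z \<in> M" for z
  proof -
    have zV: "z \<in> V" "z \<noteq> x" "z \<noteq> y" using z unfolding M_def by auto
    obtain p q where t: "tri A z p q" using vertex_on_tri[OF T SC zV(1) xyV(1) zV(2)[symmetric]] by blast
    have pq: "p \<noteq> q" using tri_in[OF T t] by blast
    have "x \<in> {z, p, q}" "y \<in> {z, p, q}" using all t by blast+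
    then have "(p = x \<and> q = y) \<or> (p = y \<and> q = x)" using zV pq xny by blast
    then show ?thesis
    proof
      assume "p = x \<and> q = y"
      then show ?thesis using t unfolding tri_def by blast
    next
      assume "p = y \<and> q = x"
      then have "(y, x) \<in> A" using t unfolding tri_def by blast
      then show ?thesis using xy tourn_asym[OF T] by blast
    qed
  qed
  have notri: False if "tri A a b d" "a \<in> M" "b \<in> M" "d \<in> M" for a b d
    using all that xM by blast
  define r where "r z = card {w \<in> M. (w, z) \<in> A}" for z
  have rlt: "r z < r z'" if zz: "z \<in> M" "z' \<in> M" "(z, z') \<in> A" for z z'
  proof -
    have "{w \<in> M. (w, z) \<in> A} \<subset> {w \<in> M. (w, z') \<in> A}"
    proof
      show "{w \<in> M. (w, z) \<in> A} \<subseteq> {w \<in> M. (w, z') \<in> A}"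
      proof
        fix w assume w: "w \<in> {w \<in> M. (w, z) \<in> A}"
        then have wM: "w \<in> M" and wz: "(w, z) \<in> A" by auto
        have "w \<noteq> z'" using wz zz(3) tourn_asym[OF T] by blast
        moreover have "w \<in> V" "z' \<in> V" using wM zz(2) unfolding M_def by auto
        ultimately have "(w, z') \<in> A"
        proof (cases "(w, z') \<in> A")
          case False
          then have "(z', w) \<in> A" using tourn_tot[OF T] \<open>w \<noteq> z'\<close> \<open>w \<in> V\<close> \<open>z' \<in> V\<close> by blast
          then have "tri A w z z'" using wz zz(3) unfolding tri_def by blast
          then show ?thesis using notri wM zz by blast
        qed
        then show "w \<in> {w \<in> M. (w, z') \<in> A}" using wM by simp
      qed
      have "z \<in> {w \<in> M. (w, z') \<in> A}" "z \<notin> {w \<in> M. (w, z) \<in> A}"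
        using zz tourn_irr[OF T] by auto
      then show "{w \<in> M. (w, z) \<in> A} \<noteq> {w \<in> M. (w, z') \<in> A}" by blast
    qed
    then show ?thesis unfolding r_def by (rule psubset_card_mono[rotated]) (use finM in simp)
  qed
  have rle: "r z + 2 < n" if z: "z \<in> M" for z
  proof -
    have "{w \<in> M. (w, z) \<in> A} \<subseteq> M - {z}" using tourn_irr[OF T] by blast
    then have "r z \<le> card (M - {z})" unfolding r_def by (rule card_mono[rotated]) (use finM in simp)
    also have "\<dots> = n - 3" using cM z finM by simp
    finally show ?thesis using n3 by simp
  qed
  have r_iff: "(u, w) \<in> A \<longleftrightarrow> r u < r w" if uw: "u \<in> M" "w \<in> M" for u w
  proof
    assume "(u, w) \<in> A" then show "r u < r w" using rlt uw by blast
  next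
    assume lt: "r u < r w"
    show "(u, w) \<in> A"
    proof (rule ccontr)
      assume nuw: "(u, w) \<notin> A"
      have "u \<noteq> w" using lt by auto
      moreover have "u \<in> V" "w \<in> V" using uw unfolding M_def by auto
      ultimately have "(w, u) \<in> A" using tourn_tot[OF T] nuw by blast
      then have "r w < r u" using rlt uw by blast
      then show False using lt by simp
    qed
  qed
  have injr: "inj_on r M"
  proof (rule inj_onI)
    fix u w assume uw: "u \<in> M" "w \<in> M" "r u = r w"
    show "u = w"
    proof (rule ccontr)
      assume "u \<noteq> w"
      moreover have "u \<in> V" "w \<in> V" using uw unfolding M_def by auto
      ultimately have "(u, w) \<in> A \<or> (w, u) \<in> A" using tourn_tot[OF T] by blast
      then show False using rlt uw by fastforce
    qed
  qed
  have imgM: "(\<lambda>z. r z + 2) ` M = {2..n - 1}"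
  proof (rule card_subset_eq)
    show "finite {2..n - 1}" by simp
    show "(\<lambda>z. r z + 2) ` M \<subseteq> {2..n - 1}" using rle by fastforce
    have "inj_on (\<lambda>z. r z + 2) M" using injr unfolding inj_on_def by simp
    then have "card ((\<lambda>z. r z + 2) ` M) = card M" by (rule card_image)
    then show "card ((\<lambda>z. r z + 2) ` M) = card {2..n - 1}" using cM n3 by simp
  qed
  define f where "f z = (if z = y then 1 else if z = x then n else r z + 2)" for z
  have fy: "f y = 1" and fx: "f x = n" unfolding f_def using xny by auto
  have fM: "f z = r z + 2" if "z \<in> M" for z unfolding f_def using that xM yM by auto
  have imgV: "f ` V = {1..n}"
  proof -
    have e1: "f ` V = insert 1 (insert n (f ` M))" unfolding VM using fy fx by simp
    have "f ` M = (\<lambda>z. r z + 2) ` M" by (rule image_cong[OF refl fM])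
    then have e2: "f ` M = {2..n - 1}" using imgM by simp
    have e3: "insert 1 (insert n {2..n - 1}) = {1..n}" using n3 by auto
    show ?thesis using e1 e2 e3 by simp
  qed
  have "inj_on f V"
  proof (rule eq_card_imp_inj_on[OF fin])
    show "card (f ` V) = card V" unfolding imgV cV by simp
  qed
  then have bij: "bij_betw f V {1..n}" unfolding bij_betw_def using imgV by blast
  have arcs: "(u, w) \<in> A \<longleftrightarrow> (f u, f w) \<in> D_arcs n" if uw: "u \<in> V" "w \<in> V" for u w
  proof -
    have cu: "u = y \<or> u = x \<or> u \<in> M" and cw: "w = y \<or> w = x \<or> w \<in> M" using uw unfolding M_def by auto
    have yx: "(y, x) \<notin> A" using xy tourn_asym[OF T] by blast
    have fb: "2 \<le> f z \<and> f z < n" if "z \<in> M" for z using fM[OF that] rle[OF that] by simp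
    show ?thesis
      using cu
    proof (elim disjE)
      assume u: "u = y"
      show ?thesis using cw
      proof (elim disjE)
        assume w: "w = y"
        show ?thesis unfolding u w fy using tourn_irr[OF T, of y] D11[of n] by blast
      next
        assume w: "w = x"
        show ?thesis unfolding u w fy fx using yx D1n[OF n3] by blast
      next
        assume w: "w \<in> M"
        show ?thesis unfolding u fy using Mstruct[OF w] D1m[of "f w" n] fb[OF w] by blast
      qed
    next
      assume u: "u = x"
      show ?thesis using cw
      proof (elim disjE)
        assume w: "w = y"
        show ?thesis unfolding u w fy fx using xy Dn1[OF n3] by blast
      next
        assume w: "w = x"
        show ?thesis unfolding u w fx using tourn_irr[OF T, of x] Dnn[of n] by blast
      next
        assume w: "w \<in> M"
        have "(x, w) \<notin> A" using Mstruct[OF w] tourn_asym[OF T] by blast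
        then show ?thesis unfolding u fx using Dnm[of "f w" n] fb[OF w] by blast
      qed
    next
      assume u: "u \<in> M"
      show ?thesis using cw
      proof (elim disjE)
        assume w: "w = y"
        have "(u, y) \<notin> A" using Mstruct[OF u] tourn_asym[OF T] by blast
        then show ?thesis unfolding w fy using Dm1[of "f u" n] fb[OF u] by blast
      next
        assume w: "w = x"
        show ?thesis unfolding w fx using Mstruct[OF u] Dmn[of "f u" n] fb[OF u] by blast
      next
        assume w: "w \<in> M"
        have "(f u, f w) \<in> D_arcs n \<longleftrightarrow> f u < f w" using Dmm[of "f u" n "f w"] fb[OF u] fb[OF w] by blast
        also have "\<dots> \<longleftrightarrow> r u < r w" using fM[OF u] fM[OF w] by simp
        also have "\<dots> \<longleftrightarrow> (u, w) \<in> A" using r_iff[OF u w] by simp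
        finally show ?thesis by simp
      qed
    qed
  qed
  show ?thesis unfolding digraph_iso_def using bij arcs by blast
qed



lemma iso_1:
  assumes T: "tournament V A" and fin: "finite V" and cV: "card V = 1"
  shows "digraph_iso V A {1..1} (D_arcs 1)"
proof -
  obtain a where V: "V = {a}" using cV card_1_singletonE by blast
  have "bij_betw (\<lambda>_. 1::nat) V {1..1}" unfolding V by (simp add: bij_betw_def)
  moreover have "\<forall>u\<in>V. \<forall>w\<in>V. (u, w) \<in> A \<longleftrightarrow> ((\<lambda>_. 1::nat) u, (\<lambda>_. 1::nat) w) \<in> D_arcs 1"
  proof (intro ballI)
    fix u w assume "u \<in> V" "w \<in> V"
    then have "u = a" "w = a" unfolding V by auto
    moreover have "(a, a) \<notin> A" using tourn_irr[OF T] .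
    moreover have "(1::nat, 1::nat) \<notin> D_arcs 1" unfolding D_arcs_def by simp
    ultimately show "(u, w) \<in> A \<longleftrightarrow> ((\<lambda>_. 1::nat) u, (\<lambda>_. 1::nat) w) \<in> D_arcs 1" by simp
  qed
  ultimately show ?thesis unfolding digraph_iso_def by blast
qed

lemma not_strong_2:
  assumes T: "tournament V A" and cV: "card V = 2"
  shows "\<not> strongly_connected V A"
proof
  assume SC: "strongly_connected V A"
  obtain a b where V: "V = {a, b}" and ab: "a \<noteq> b" using cV unfolding card_2_iff by blast
  have "\<exists>u w. V = {u, w} \<and> u \<noteq> w \<and> (u, w) \<notin> A"
  proof (cases "(a, b) \<in> A")
    case True
    then have "(b, a) \<notin> A" using tourn_asym[OF T] by blast
    moreover have "V = {b, a}" using V by auto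
    ultimately show ?thesis using ab by blast
  next
    case False
    then show ?thesis using V ab by blast
  qed
  then obtain u w where V': "V = {u, w}" and uw: "u \<noteq> w" "(u, w) \<notin> A" by blast
  have cl: "\<forall>p q. (p, q) \<in> A \<inter> V \<times> V \<longrightarrow> p \<in> {u} \<longrightarrow> q \<in> {u}"
  proof (intro allI impI)
    fix p q assume pq: "(p, q) \<in> A \<inter> V \<times> V" and p: "p \<in> {u}"
    have "q = u \<or> q = w" using pq unfolding V' by auto
    moreover have "q \<noteq> w" using pq p uw by auto
    ultimately show "q \<in> {u}" by simp
  qed
  have "u \<in> V" "w \<in> V" unfolding V' by auto
  then have "(u, w) \<in> (A \<inter> V \<times> V)\<^sup>*" using SC unfolding strongly_connected_def by blast
  then have "w \<in> {u}" using rtrancl_closed[OF _ _ cl] by blast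
  then show False using uw by blast
qed

theorem mainTheorem13:
  fixes V :: "'a set" and A :: "'a rel" and n k :: nat
  assumes "n \<ge> 1"
    and "finite V" and "card V = n"
    and "tournament V A"
    and "strongly_connected V A"
    and "\<not> digraph_iso V A {1..n} (D_arcs n)"
    and "k > 1"
  shows "chrom_poly V A k < chrom_poly {1..n} (D_arcs n) k"
proof -
  note T = assms(4) and fin = assms(2) and cV = assms(3) and SC = assms(5) and niso = assms(6)
  have k1: "k \<ge> 1" and k2: "k \<ge> 2" using assms(7) by auto
  have n3: "n \<ge> 3"
  proof (rule ccontr)
    assume "\<not> n \<ge> 3"
    then have "n = 1 \<or> n = 2" using assms(1) by auto
    then show False
    proof
      assume "n = 1"
      then show False using iso_1[OF T fin] cV niso by simp
    next
      assume "n = 2"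
      then show False using not_strong_2[OF T] cV SC by simp
    qed
  qed
  obtain v where v: "v \<in> V" and vS: "card (V - {v}) = 2 \<or> strongly_connected (V - {v}) (A \<inter> (V - {v}) \<times> (V - {v}))"
    using choose_v[OF T SC fin] n3 cV by auto
  let ?S = "V - {v}"
  have cS: "card ?S = n - 1" using v fin cV by simp
  have TS: "tournament ?S (A \<inter> ?S \<times> ?S)" using tourn_sub[OF T] by blast
  have PS: "chrom_poly ?S (A \<inter> ?S \<times> ?S) k \<le> Q k (n - 1)"
    using bound[OF k1, of "n - 1" ?S "A \<inter> ?S \<times> ?S"] n3 TS fin cS vS by simp
  have "card ?S \<noteq> 0" using cS n3 by simp
  then have "?S \<noteq> {}" by (metis card.empty)
  then obtain w where w: "w \<in> V" "w \<noteq> v" by blast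
  obtain x y where t: "tri A v x y" using vertex_on_tri[OF T SC v w] by blast
  have xy: "(x, y) \<in> A" using t unfolding tri_def by blast
  have "\<not> (\<forall>a b d. tri A a b d \<longrightarrow> x \<in> {a, b, d} \<and> y \<in> {a, b, d})"
    using iso_Dn[OF T fin cV n3 SC xy] niso by blast
  then obtain a b d where bad: "tri A a b d" "\<not> (x \<in> {a, b, d} \<and> y \<in> {a, b, d})" by blast
  have "chrom_poly V A k < (k - 1) * chrom_poly ?S (A \<inter> ?S \<times> ?S) k + (k - 1) * k ^ (card ?S - 1)"
    by (rule step_strict[OF T fin v t k2 bad])
  also have "\<dots> \<le> (k - 1) * Q k (n - 1) + (k - 1) * k ^ (n - 1 - 1)"
    using PS cS by simp
  also have "\<dots> = Q k (Suc (n - 1))" using Q_rec[OF k1, of "n - 1"] n3 by simp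
  also have "Suc (n - 1) = n" using n3 by simp
  also have "Q k n \<le> chrom_poly {1..n} (D_arcs n) k" using Dn_lower[OF _ k1, of n] n3 by simp
  finally show ?thesis .
qed


end
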